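(* Let $G$ be a graph on $n\ge 3$ vertices with no isolated vertices, and let $r$ be a positive integer. If $\mathscr{Z}^{\rm TAR}(G)\cong K_{1,r}\,\square\,K_2$, then $G\cong K_{1,r}$.
   Context: Zero forcing: starting with a set $S$ of blue vertices, a blue vertex $v$ may turn blue a white vertex $w$ if $w$ is the only white neighbor of $v$; $S$ is a zero forcing set if repeated application colors all vertices blue. $\mathscr{Z}^{\rm TAR}(G)$ has vertices the zero forcing sets of $G$, two adjacent iff their symmetric difference has size 1. $K_{1,r}$ is the star with $r$ leaves and $\square$ is the Cartesian product of graphs. *)

theory Defs
  imports Main
begin

definition graph :: "'a set \<Rightarrow> ('a \<Rightarrow> 'a \<Rightarrow> bool) \<Rightarrow> bool" where
  "graph V E \<longleftrightarrow> finite V \<and> (\<forall>x y. E x y \<longrightarrow> x \<in> V \<and> y \<in> V \<and> x \<noteq> y \<and> E y x)"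

definition graph_iso :: "'a set \<Rightarrow> ('a \<Rightarrow> 'a \<Rightarrow> bool) \<Rightarrow> 'b set \<Rightarrow> ('b \<Rightarrow> 'b \<Rightarrow> bool) \<Rightarrow> bool" where
  "graph_iso V1 E1 V2 E2 \<longleftrightarrow>
     (\<exists>f. bij_betw f V1 V2 \<and> (\<forall>x\<in>V1. \<forall>y\<in>V1. E1 x y \<longleftrightarrow> E2 (f x) (f y)))"

inductive_set zf_closure :: "'a set \<Rightarrow> ('a \<Rightarrow> 'a \<Rightarrow> bool) \<Rightarrow> 'a set \<Rightarrow> 'a set"
  for V E S where
  base: "x \<in> S \<Longrightarrow> x \<in> zf_closure V E S"
| force: "\<lbrakk>v \<in> zf_closure V E S; v \<in> V; w \<in> V; E v w;
          \<forall>u. E v u \<and> u \<noteq> w \<longrightarrow> u \<in> zf_closure V E S\<rbrakk> \<Longrightarrow> w \<in> zf_closure V E S"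

definition zero_forcing_set :: "'a set \<Rightarrow> ('a \<Rightarrow> 'a \<Rightarrow> bool) \<Rightarrow> 'a set \<Rightarrow> bool" where
  "zero_forcing_set V E S \<longleftrightarrow> S \<subseteq> V \<and> zf_closure V E S = V"

definition ZTAR_V :: "'a set \<Rightarrow> ('a \<Rightarrow> 'a \<Rightarrow> bool) \<Rightarrow> 'a set set" where
  "ZTAR_V V E = {S. zero_forcing_set V E S}"

definition ZTAR_E :: "'a set \<Rightarrow> ('a \<Rightarrow> 'a \<Rightarrow> bool) \<Rightarrow> 'a set \<Rightarrow> 'a set \<Rightarrow> bool" where
  "ZTAR_E V E S T \<longleftrightarrow> S \<in> ZTAR_V V E \<and> T \<in> ZTAR_V V E \<and> card ((S - T) \<union> (T - S)) = 1"

definition star_V :: "nat \<Rightarrow> nat set" where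
  "star_V r = {0..r}"

definition star_E :: "nat \<Rightarrow> nat \<Rightarrow> nat \<Rightarrow> bool" where
  "star_E r x y \<longleftrightarrow> x \<in> star_V r \<and> y \<in> star_V r \<and> ((x = 0 \<and> y \<noteq> 0) \<or> (x \<noteq> 0 \<and> y = 0))"

definition K2_V :: "bool set" where "K2_V = UNIV"
definition K2_E :: "bool \<Rightarrow> bool \<Rightarrow> bool" where "K2_E x y \<longleftrightarrow> x \<noteq> y"

definition cart_V :: "'a set \<Rightarrow> 'b set \<Rightarrow> ('a \<times> 'b) set" where
  "cart_V V1 V2 = V1 \<times> V2"

definition cart_E :: "'a set \<Rightarrow> ('a \<Rightarrow> 'a \<Rightarrow> bool) \<Rightarrow> 'b set \<Rightarrow> ('b \<Rightarrow> 'b \<Rightarrow> bool)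
    \<Rightarrow> 'a \<times> 'b \<Rightarrow> 'a \<times> 'b \<Rightarrow> bool" where
  "cart_E V1 E1 V2 E2 p q \<longleftrightarrow> p \<in> V1 \<times> V2 \<and> q \<in> V1 \<times> V2 \<and>
     ((fst p = fst q \<and> E2 (snd p) (snd q)) \<or> (snd p = snd q \<and> E1 (fst p) (fst q)))"

end

theory Submission
  imports Defs
begin

lemma cl_sub:
  assumes "S \<subseteq> V" shows "zf_closure V E S \<subseteq> V"
proof
  fix x assume "x \<in> zf_closure V E S" then show "x \<in> V"
    by induct (use assms in auto)
qed

lemma graphD:
  assumes "graph V E" "E x y" shows "x \<in> V" "y \<in> V" "x \<noteq> y" "E y x"
  using assms unfolding graph_def by blast+

lemma zf_minus1:
  assumes g: "graph V E" and v: "v \<in> V" and ez: "E v z"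
  shows "zero_forcing_set V E (V - {v})"
proof -
  have z: "z \<in> V" "z \<noteq> v" "E z v" using graphD[OF g ez] by auto
  have "V \<subseteq> zf_closure V E (V - {v})"
  proof
    fix x assume x: "x \<in> V"
    show "x \<in> zf_closure V E (V - {v})"
    proof (cases "x = v")
      case True
      have c1: "z \<in> zf_closure V E (V - {v})" using z by (intro zf_closure.base) auto
      have c2: "\<forall>u. E z u \<and> u \<noteq> v \<longrightarrow> u \<in> zf_closure V E (V - {v})"
        using graphD(2)[OF g] by (auto intro: zf_closure.base)
      show ?thesis using zf_closure.force[OF c1 z(1) v z(3) c2] True by simp
    qed (use x in \<open>auto intro: zf_closure.base\<close>)
  qed
  then show ?thesis unfolding zero_forcing_set_def using cl_sub[of "V - {v}" V E] by auto
qed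

lemma zf_minus2:
  assumes g: "graph V E" and vw: "v \<in> V" "w \<in> V" "v \<noteq> w"
    and u: "u \<in> V" "u \<noteq> v" "u \<noteq> w" "E u v" "\<not> E u w" and ez: "E w z"
  shows "zero_forcing_set V E (V - {v, w})"
proof -
  let ?C = "zf_closure V E (V - {v, w})"
  have vin: "v \<in> ?C"
  proof -
    have c1: "u \<in> ?C" using u by (intro zf_closure.base) auto
    have c2: "\<forall>y. E u y \<and> y \<noteq> v \<longrightarrow> y \<in> ?C"
      using graphD(2)[OF g] u by (auto intro: zf_closure.base)
    show ?thesis using zf_closure.force[OF c1 u(1) vw(1) u(4) c2] .
  qed
  have z: "z \<in> V" "z \<noteq> w" "E z w" using graphD[OF g ez] by auto
  have win: "w \<in> ?C"
  proof -
    have c1: "z \<in> ?C" using z vin by (cases "z = v") (auto intro: zf_closure.base)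
    have c2: "\<forall>y. E z y \<and> y \<noteq> w \<longrightarrow> y \<in> ?C"
      using graphD(2)[OF g] vin by (auto intro: zf_closure.base)
    show ?thesis using zf_closure.force[OF c1 z(1) vw(2) z(3) c2] .
  qed
  have "V \<subseteq> ?C"
  proof
    fix x assume "x \<in> V" then show "x \<in> ?C" using vin win
      by (cases "x = v \<or> x = w") (auto intro: zf_closure.base)
  qed
  then show ?thesis unfolding zero_forcing_set_def using cl_sub[of "V - {v,w}" V E] by auto
qed

lemma no_force:
  assumes g: "graph V E" and S: "S \<subseteq> V"
    and nf: "\<forall>u\<in>S. \<not> (\<exists>x\<in>V - S. E u x \<and> (\<forall>y\<in>V - S. y \<noteq> x \<longrightarrow> \<not> E u y))"
  shows "zf_closure V E S = S"
proof
  show "S \<subseteq> zf_closure V E S" by (auto intro: zf_closure.base)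
  show "zf_closure V E S \<subseteq> S"
  proof
    fix x assume "x \<in> zf_closure V E S" then show "x \<in> S"
    proof induct
      case (base x) then show ?case .
    next
      case (force v w)
      show ?case
      proof (rule ccontr)
        assume "w \<notin> S"
        then have "\<exists>x\<in>V - S. E v x \<and> (\<forall>y\<in>V - S. y \<noteq> x \<longrightarrow> \<not> E v y)"
          using force by blast
        then show False using nf force by blast
      qed
    qed
  qed
qed


lemma sd1_cases:
  assumes "card ((S - T) \<union> (T - S)) = 1"
  obtains x where "(S - T) \<union> (T - S) = {x}"
  using assms card_1_singletonE by blast

lemma sdlem:
  assumes "T \<subseteq> V" "(V - {a} - T) \<union> (T - (V - {a})) = {x}" "T \<noteq> V" "a \<in> V"
  shows "a \<notin> T \<and> x \<in> V \<and> x \<noteq> a \<and> T = V - {a, x}"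
proof -
  have aT: "a \<notin> T"
  proof
    assume "a \<in> T"
    then have "a \<in> (V - {a} - T) \<union> (T - (V - {a}))" by simp
    then have "x = a" using assms(2) by simp
    have "V \<subseteq> T"
    proof
      fix z assume "z \<in> V"
      show "z \<in> T"
      proof (rule ccontr)
        assume "z \<notin> T"
        then have "z \<noteq> a" using \<open>a \<in> T\<close> by auto
        then have "z \<in> (V - {a} - T) \<union> (T - (V - {a}))" using \<open>z \<in> V\<close> \<open>z \<notin> T\<close> by simp
        then show False using assms(2) \<open>x = a\<close> \<open>z \<noteq> a\<close> by simp
      qed
    qed
    then show False using assms(1,3) by simp
  qed
  have xin: "x \<in> (V - {a} - T) \<union> (T - (V - {a}))" using assms(2) by simp
  then have x: "x \<in> V" "x \<noteq> a" "x \<notin> T" using assms(1) aT by auto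
  have "T = V - {a, x}"
  proof
    show "T \<subseteq> V - {a, x}" using assms(1) aT x by auto
    show "V - {a, x} \<subseteq> T"
    proof
      fix z assume z: "z \<in> V - {a, x}"
      show "z \<in> T"
      proof (rule ccontr)
        assume "z \<notin> T"
        then have "z \<in> (V - {a} - T) \<union> (T - (V - {a}))" using z by simp
        then show False using assms(2) z by simp
      qed
    qed
  qed
  then show ?thesis using aT x by simp
qed

theorem proposition2p35:
  fixes V :: "'a set" and E :: "'a \<Rightarrow> 'a \<Rightarrow> bool" and r :: nat
  assumes "graph V E"
    and "card V \<ge> 3"
    and "\<forall>v\<in>V. \<exists>u. E v u"
    and "r \<ge> 1"
    and "graph_iso (ZTAR_V V E) (ZTAR_E V E)
           (cart_V (star_V r) K2_V) (cart_E (star_V r) (star_E r) K2_V K2_E)"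
  shows "graph_iso V E (star_V r) (star_E r)"
proof -
  note g = assms(1)
  let ?ZV = "ZTAR_V V E" and ?ZE = "ZTAR_E V E"
  let ?CV = "cart_V (star_V r) K2_V" and ?CE = "cart_E (star_V r) (star_E r) K2_V K2_E"
  obtain f where fb: "bij_betw f ?ZV ?CV"
    and fe: "\<And>S T. S \<in> ?ZV \<Longrightarrow> T \<in> ?ZV \<Longrightarrow> ?ZE S T \<longleftrightarrow> ?CE (f S) (f T)"
    using assms(5) unfolding graph_iso_def by blast
  have CV: "?CV = {0..r} \<times> UNIV" by (simp add: cart_V_def star_V_def K2_V_def)
  have CE: "?CE p q \<longleftrightarrow> fst p \<le> r \<and> fst q \<le> r \<and>
      ((fst p = fst q \<and> snd p \<noteq> snd q) \<or>
       (snd p = snd q \<and> ((fst p = 0 \<and> fst q \<noteq> 0) \<or> (fst p \<noteq> 0 \<and> fst q = 0))))" for p q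
    by (auto simp: cart_E_def star_E_def star_V_def K2_V_def K2_E_def mem_Times_iff)
  have ZV: "S \<in> ?ZV \<longleftrightarrow> S \<subseteq> V \<and> zf_closure V E S = V" for S
    by (simp add: ZTAR_V_def zero_forcing_set_def)
  have ZE: "?ZE S T \<longleftrightarrow> S \<in> ?ZV \<and> T \<in> ?ZV \<and> card ((S - T) \<union> (T - S)) = 1" for S T
    by (simp add: ZTAR_E_def)
  have VZ: "V \<in> ?ZV"
  proof -
    have "V \<subseteq> zf_closure V E V" by (auto intro: zf_closure.base)
    then have "zf_closure V E V = V" using cl_sub[of V V E] by blast
    then show ?thesis using ZV by blast
  qed
  have VmZ: "V - {v} \<in> ?ZV" if vV: "v \<in> V" for v
  proof -
    obtain z where ez: "E v z" using assms(3) vV by blast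
    have "zero_forcing_set V E (V - {v})" by (rule zf_minus1[OF g vV ez])
    then show ?thesis unfolding ZTAR_V_def by (rule CollectI)
  qed
  have inj: "inj_on f ?ZV" using fb bij_betw_def by blast
  have fin: "S \<in> ?ZV \<Longrightarrow> f S \<in> ?CV" for S using fb bij_betwE by blast
  have surj: "p \<in> ?CV \<Longrightarrow> \<exists>T\<in>?ZV. f T = p" for p using fb
    by (metis bij_betw_def imageE)
  have Vm_inj: "v \<in> V \<Longrightarrow> w \<in> V \<Longrightarrow> V - {v} = V - {w} \<Longrightarrow> v = w" for v w by blast
  have nbrV: "\<exists>v\<in>V. T = V - {v}" if "?ZE V T" for T
  proof -
    have T: "T \<subseteq> V" "card ((V - T) \<union> (T - V)) = 1" using that ZE ZV by auto
    obtain x where "(V - T) \<union> (T - V) = {x}" using T(2) by (rule sd1_cases)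
    then show ?thesis using T by (intro bexI[of _ x]) auto
  qed
  have adjVm: "?ZE V (V - {v})" if "v \<in> V" for v
  proof -
    have "(V - (V - {v})) \<union> ((V - {v}) - V) = {v}" using that by auto
    then show ?thesis using ZE VZ VmZ[OF that] by simp
  qed
  obtain i b where fV: "f V = (i, b)" by (cases "f V")
  have iV: "i \<le> r" using fin[OF VZ] fV CV by auto
  have i0: "i = 0"
  proof (rule ccontr)
    assume i: "i \<noteq> 0"
    have nb: "q = (0, b) \<or> q = (i, \<not> b)" if "?CE (i, b) q" for q
      using that i CE[of "(i,b)" q] by (cases q) auto
    obtain a1 a2 a3 where a: "a1 \<in> V" "a2 \<in> V" "a3 \<in> V" "a1 \<noteq> a2" "a2 \<noteq> a3" "a1 \<noteq> a3"
    proof -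
      obtain B where "B \<subseteq> V" "card B = 3"
        using assms(2) obtain_subset_with_card_n by metis
      then show ?thesis using that card_3_iff[of B] by auto
    qed
    have im: "f (V - {a}) = (0, b) \<or> f (V - {a}) = (i, \<not> b)" if "a \<in> V" for a
      using nb fe[OF VZ VmZ[OF that]] adjVm[OF that] fV by simp
    have d: "f (V - {x}) \<noteq> f (V - {y})" if "x \<in> V" "y \<in> V" "x \<noteq> y" for x y
      using inj VmZ that Vm_inj inj_on_eq_iff by metis
    show False using im[OF a(1)] im[OF a(2)] im[OF a(3)] d[OF a(1,2,4)] d[OF a(2,3,5)] d[OF a(1,3,6)]
      by auto
  qed
  obtain T0 where T0: "T0 \<in> ?ZV" "f T0 = (0, \<not> b)" using surj[of "(0, \<not> b)"] CV by auto
  have "?ZE V T0" using fe[OF VZ T0(1)] T0(2) fV i0 CE by simp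
  then obtain v0 where v0: "v0 \<in> V" "T0 = V - {v0}" using nbrV by blast
  have fv0: "f (V - {v0}) = (0, \<not> b)" using T0 v0 by simp
  have others: "\<exists>j. 1 \<le> j \<and> j \<le> r \<and> f (V - {w}) = (j, b)" if w: "w \<in> V" "w \<noteq> v0" for w
  proof -
    obtain j c where fw: "f (V - {w}) = (j, c)" by (cases "f (V - {w})")
    have ce: "?CE (0, b) (j, c)" using fe[OF VZ VmZ[OF w(1)]] adjVm[OF w(1)] fV i0 fw by simp
    have "f (V - {w}) \<noteq> f (V - {v0})"
      using inj VmZ w v0 Vm_inj inj_on_eq_iff by metis
    then show ?thesis using ce CE[of "(0,b)" "(j,c)"] fw fv0 by auto
  qed
  have claim1: "V - {v0, w} \<in> ?ZV" if w: "w \<in> V" "w \<noteq> v0" for w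
  proof -
    obtain j where j: "1 \<le> j" "j \<le> r" "f (V - {w}) = (j, b)" using others[OF w] by blast
    obtain T where T: "T \<in> ?ZV" "f T = (j, \<not> b)" using surj[of "(j, \<not> b)"] CV j by auto
    have e1: "?ZE (V - {v0}) T" using fe[OF VmZ[OF v0(1)] T(1)] fv0 T(2) CE j by simp
    have e2: "?ZE (V - {w}) T" using fe[OF VmZ[OF w(1)] T(1)] j T(2) CE by simp
    have TV: "T \<noteq> V" using T(2) fV j by auto
    have Tsub: "T \<subseteq> V" using T(1) ZV by blast
    have e1c: "card (((V - {v0}) - T) \<union> (T - (V - {v0}))) = 1" using e1 ZE[of "V - {v0}" T] by blast
    obtain x where x: "((V - {v0}) - T) \<union> (T - (V - {v0})) = {x}"
      using e1c by (rule sd1_cases)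
    have e2c: "card (((V - {w}) - T) \<union> (T - (V - {w}))) = 1" using e2 ZE[of "V - {w}" T] by blast
    obtain y where y: "((V - {w}) - T) \<union> (T - (V - {w})) = {y}"
      using e2c by (rule sd1_cases)
    have A: "v0 \<notin> T \<and> x \<in> V \<and> x \<noteq> v0 \<and> T = V - {v0, x}"
      by (rule sdlem[OF Tsub x TV v0(1)])
    have B: "w \<notin> T \<and> y \<in> V \<and> y \<noteq> w \<and> T = V - {w, y}"
      by (rule sdlem[OF Tsub y TV w(1)])
    have "w = x"
    proof (rule ccontr)
      assume "w \<noteq> x"
      then have "w \<in> V - {v0, x}" using w by simp
      moreover have TA: "T = V - {v0, x}" using A by blast
      moreover have "w \<notin> T" using B by blast
      ultimately show False by blast
    qed
    then have "T = V - {v0, w}" using A by simp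
    then show ?thesis using T(1) by simp
  qed
  have claim2: "V - {v, w} \<notin> ?ZV" if vw: "v \<in> V" "w \<in> V" "v \<noteq> v0" "w \<noteq> v0" "v \<noteq> w" for v w
  proof
    assume Z: "V - {v, w} \<in> ?ZV"
    obtain jv where jv: "1 \<le> jv" "jv \<le> r" "f (V - {v}) = (jv, b)" using others vw by blast
    obtain jw where jw: "1 \<le> jw" "jw \<le> r" "f (V - {w}) = (jw, b)" using others vw by blast
    have "jv \<noteq> jw"
    proof
      assume "jv = jw"
      then have "f (V - {v}) = f (V - {w})" using jv jw by simp
      then have "V - {v} = V - {w}" using inj VmZ vw inj_on_eq_iff by metis
      then show False using vw by blast
    qed
    have s1: "((V - {v}) - (V - {v, w})) \<union> ((V - {v, w}) - (V - {v})) = {w}" using vw by auto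
    have s2: "((V - {w}) - (V - {v, w})) \<union> ((V - {v, w}) - (V - {w})) = {v}" using vw by auto
    have e1: "?CE (jv, b) (f (V - {v, w}))"
      using fe[OF VmZ[OF vw(1)] Z] ZE s1 Z VmZ[OF vw(1)] jv by simp
    have e2: "?CE (jw, b) (f (V - {v, w}))"
      using fe[OF VmZ[OF vw(2)] Z] ZE s2 Z VmZ[OF vw(2)] jw by simp
    obtain k c where kc: "f (V - {v, w}) = (k, c)" by (cases "f (V - {v, w})")
    have "k = 0 \<and> c = b" using e1 e2 kc CE[of "(jv,b)" "(k,c)"] CE[of "(jw,b)" "(k,c)"]
      \<open>jv \<noteq> jw\<close> jv jw by auto
    then have "f (V - {v, w}) = f V" using kc fV i0 by simp
    then have "V - {v, w} = V" using inj Z VZ inj_on_eq_iff by metis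
    then show False using vw by blast
  qed
  have Ev: "E x y \<Longrightarrow> x \<in> V \<and> y \<in> V \<and> x \<noteq> y" for x y using graphD[OF g] by blast
  have Es: "E x y \<Longrightarrow> E y x" for x y using graphD[OF g] by blast
  have twin: "E u v \<longleftrightarrow> E u w" if vw: "v \<in> V" "w \<in> V" "v \<noteq> v0" "w \<noteq> v0" "v \<noteq> w"
    and u: "u \<in> V" "u \<noteq> v" "u \<noteq> w" for u v w
  proof (rule ccontr)
    assume "\<not> (E u v \<longleftrightarrow> E u w)"
    then consider "E u v" "\<not> E u w" | "E u w" "\<not> E u v" by blast
    then show False
    proof cases
      case 1
      obtain z where "E w z" using assms(3) vw by blast
      then have "zero_forcing_set V E (V - {v, w})"
        using zf_minus2[OF g vw(1,2,5) u 1] by blast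
      then show False using claim2[OF vw] by (simp add: ZTAR_V_def)
    next
      case 2
      obtain z where "E v z" using assms(3) vw by blast
      then have "zero_forcing_set V E (V - {w, v})"
        using zf_minus2[OF g vw(2,1) _ u(1,3,2) 2] vw(5) by blast
      then show False using claim2[OF vw] by (simp add: ZTAR_V_def insert_commute)
    qed
  qed
  have v0all: "E v0 w" if w: "w \<in> V" "w \<noteq> v0" for w
  proof -
    obtain u where u: "E v0 u" using assms(3) v0 by blast
    have uu: "u \<in> V" "u \<noteq> v0" using Ev[OF u] by auto
    show ?thesis
    proof (cases "u = w")
      case True then show ?thesis using u by simp
    next
      case False
      then show ?thesis using twin[OF uu(1) w(1) uu(2) w(2) False v0(1)] u uu w by auto
    qed
  qed
  have noE: "\<not> E v w" if vw: "v \<in> V" "w \<in> V" "v \<noteq> v0" "w \<noteq> v0" for v w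
  proof
    assume evw: "E v w"
    have vw5: "v \<noteq> w" using Ev[OF evw] by simp
    let ?S = "V - {v0, w}"
    have "zf_closure V E ?S = V" using claim1[OF vw(2,4)] ZV by blast
    moreover have "?S \<noteq> V" using vw by blast
    ultimately have "\<not> (\<forall>u\<in>?S. \<not> (\<exists>x\<in>V - ?S. E u x \<and> (\<forall>y\<in>V - ?S. y \<noteq> x \<longrightarrow> \<not> E u y)))"
      using no_force[OF g, of ?S] by blast
    then obtain u x where ux: "u \<in> ?S" "x \<in> V - ?S" "E u x" "\<forall>y\<in>V - ?S. y \<noteq> x \<longrightarrow> \<not> E u y"
      by blast
    have Vs: "V - ?S = {v0, w}" using vw v0 by blast
    have "E v0 u" using v0all[of u] ux(1) by blast
    then have "E u v0" by (rule Es)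
    then have nuw: "\<not> E u w" using ux Vs vw by auto
    have uv: "u \<noteq> v" using nuw evw by blast
    have u1: "u \<in> V" "u \<noteq> v0" "u \<noteq> w" using ux(1) by auto
    have "E v u \<longleftrightarrow> E v w" by (rule twin) (use u1 vw uv vw5 in auto)
    then have "E v u" using evw by simp
    then have "E u v" by (rule Es)
    moreover have "E u v \<longleftrightarrow> E u w" by (rule twin) (use u1 vw uv vw5 in auto)
    ultimately show False using nuw by blast
  qed
  define gm where "gm v = fst (f (V - {v}))" for v
  have gm0: "gm v0 = 0" using fv0 gm_def by simp
  have gm1: "1 \<le> gm w \<and> gm w \<le> r \<and> f (V - {w}) = (gm w, b)" if "w \<in> V" "w \<noteq> v0" for w
    using others[OF that] gm_def by auto
  have bij: "bij_betw gm V (star_V r)"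
    unfolding bij_betw_def
  proof
    show "inj_on gm V"
    proof
      fix x y assume xy: "x \<in> V" "y \<in> V" "gm x = gm y"
      show "x = y"
      proof (cases "x = v0 \<or> y = v0")
        case True then show ?thesis using gm0 gm1 xy by (metis not_one_le_zero)
      next
        case False
        then have "f (V - {x}) = f (V - {y})" using gm1 xy by metis
        then have "V - {x} = V - {y}" using inj VmZ xy inj_on_eq_iff by metis
        then show ?thesis using xy by blast
      qed
    qed
    show "gm ` V = star_V r"
    proof
      show "gm ` V \<subseteq> star_V r"
      proof
        fix j assume "j \<in> gm ` V"
        then obtain x where x: "x \<in> V" "j = gm x" by blast
        show "j \<in> star_V r"
        proof (cases "x = v0")
          case True then show ?thesis using x gm0 by (simp add: star_V_def)
        next
          case False then show ?thesis using x gm1[OF x(1) False] by (simp add: star_V_def)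
        qed
      qed
      show "star_V r \<subseteq> gm ` V"
      proof
        fix j assume j: "j \<in> star_V r"
        show "j \<in> gm ` V"
        proof (cases "j = 0")
          case True then show ?thesis using gm0 v0 by force
        next
          case False
          obtain T where T: "T \<in> ?ZV" "f T = (j, b)" using surj[of "(j, b)"] CV j
            by (auto simp: star_V_def)
          have "?ZE V T" using fe[OF VZ T(1)] T(2) fV i0 CE False j by (simp add: star_V_def)
          then obtain w where w: "w \<in> V" "T = V - {w}" using nbrV by blast
          have "gm w = j" using T w gm_def by simp
          then show ?thesis using w by force
        qed
      qed
    qed
  qed
  have gmz: "gm x = 0 \<longleftrightarrow> x = v0" if "x \<in> V" for x
    using gm0 gm1 that by (metis not_one_le_zero)
  have edges: "E x y \<longleftrightarrow> star_E r (gm x) (gm y)" if "x \<in> V" "y \<in> V" for x y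
  proof -
    have inr: "gm x \<in> star_V r" "gm y \<in> star_V r" using bij that bij_betwE by blast+
    have "E x y \<longleftrightarrow> (x = v0 \<and> y \<noteq> v0) \<or> (x \<noteq> v0 \<and> y = v0)"
    proof
      assume e: "E x y"
      show "(x = v0 \<and> y \<noteq> v0) \<or> (x \<noteq> v0 \<and> y = v0)"
        using Ev[OF e] noE[OF that] e by blast
    next
      assume "(x = v0 \<and> y \<noteq> v0) \<or> (x \<noteq> v0 \<and> y = v0)"
      then show "E x y"
      proof
        assume "x = v0 \<and> y \<noteq> v0" then show "E x y" using v0all that by blast
      next
        assume a: "x \<noteq> v0 \<and> y = v0"
        then have "E y x" using v0all that by blast
        then show "E x y" by (rule Es)
      qed
    qed
    then show ?thesis using inr gmz that by (auto simp: star_E_def)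
  qed
  show ?thesis unfolding graph_iso_def using bij edges by blast
qed

end
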